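(* Let $G$ be a countable discrete amenable group, $l:G\to[0,\infty)$ a proper length function, and $\sigma\in Z^2(G,\mathbb{T})$. Let $L=L_{\partial_l\times\partial_l}$ be the Lipschitz seminorm on $C^*_r(G,\sigma)\otimes_{\min}C^*_r(G,\sigma)^{\mathrm{op}}$ of the exterior product of the odd spectral triples $(C^*_r(G,\sigma),\ell^2(G),\partial_l)$ and $(C^*_r(G,\sigma)^{\mathrm{op}},\ell^2(G),\partial_l)$. Then for all $\phi_1,\phi_2,\phi_3,\phi_4\in P_1(G)$, $$\Delta^{\min}_{\tau_\sigma,L}(M_{\phi_1}\circ M_{\phi_2},M_{\phi_3}\circ M_{\phi_4})\le\Delta^{\min}_{\tau_\sigma,L}(M_{\phi_1},M_{\phi_3})+\Delta^{\min}_{\tau_\sigma,L}(M_{\phi_2},M_{\phi_4}).$$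
   Context: $Z^2(G,\mathbb{T})$ is the set of normalized 2-cocycles. $C_c(G,\sigma)$ is the $*$-algebra of finitely supported functions with twisted convolution $(f_1*_\sigma f_2)(x)=\sum_y f_1(y)f_2(y^{-1}x)\sigma(y,y^{-1}x)$ and involution $f^*(x)=\overline{\sigma(x,x^{-1})}\,\overline{f(x^{-1})}$. $\lambda^\sigma(f)\xi(x)=\sum_y f(y)\xi(y^{-1}x)\sigma(y,y^{-1}x)$ on $\ell^2(G)$, $\lambda^\sigma_g=\lambda^\sigma(\delta_g)$, and $C^*_r(G,\sigma)$ is the norm closure of $\lambda^\sigma(C_c(G,\sigma))$; $\tau_\sigma$ is the faithful tracial state with $\tau_\sigma(\lambda^\sigma(f))=f(1_G)$ (it is amenable since $G$ is amenable). $B^{\mathrm{op}}$ is the opposite $C^*$-algebra (same Banach space and involution, product $b^{\mathrm{op}}c^{\mathrm{op}}=(cb)^{\mathrm{op}}$); $C^*_r(G,\sigma)^{\mathrm{op}}$ is faithfully represented on $\ell^2(G)$ via $\lambda^\sigma(f)^{\mathrm{op}}\mapsto\rho^\sigma(f)$, where $\rho^\sigma(f)\xi(x)=\sum_y\xi(y)f(y^{-1}x)\sigma(y,y^{-1}x)$. A length function $l$ satisfies $l(1_G)=0$, $l(s^{-1})=l(s)$, $l(st)\le l(s)+l(t)$; it is proper if $l^{-1}([0,r])$ is finite for all $r$. $\partial_l$ is the closure of $\delta_s\mapsto l(s)\delta_s$ on $C_c(G)$. The exterior product spectral triple has Hilbert space $(\ell^2(G)\otimes\ell^2(G))^{\oplus2}$,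 with $C^*_r(G,\sigma)\otimes_{\min}C^*_r(G,\sigma)^{\mathrm{op}}$ acting diagonally through $\lambda^\sigma\otimes\rho^\sigma$, and operator $\partial_l\times\partial_l$ the closure of $\begin{pmatrix}0&\partial_l\otimes1+i\,1\otimes\partial_l\\ \partial_l\otimes1-i\,1\otimes\partial_l&0\end{pmatrix}$; $L(x)=\|[\partial_l\times\partial_l,x]\|$ for $x$ in the algebraic tensor product $\lambda^\sigma(C_c(G,\sigma))\odot\lambda^\sigma(C_c(G,\sigma))^{\mathrm{op}}$, and $L(x)=\infty$ otherwise. $P_1(G)$ is the set of positive definite functions $\phi$ on $G$ with $\phi(1_G)=1$; for such $\phi$, $M_\phi$ is the unital completely positive map on $C^*_r(G,\sigma)$ with $M_\phi(\lambda^\sigma_g)=\phi(g)\lambda^\sigma_g$. For a trace $\tau$ on unital $B$ and completely positive $F:A\to B$, $\omega^{\min}_\tau(F)$ is the continuous extension to $A\otimes_{\min}B^{\mathrm{op}}$ of $a\otimes b^{\mathrm{op}}\mapsto\tau(F(a)b)$ (existing for amenable $\tau$). For a seminorm $L$, $\mathrm{mk}_L(\varphi,\psi)=\sup\{|\varphi(x)-\psi(x)|:L(x)\le1\}$, and $\Delta^{\min}_{\tau,L}(F,G)=\mathrm{mk}_L(\omega^{\min}_\tau(F),\omega^{\min}_\tau(G))$ for trace channels $F,G$ (completely positive with $\tau(F(1))=1$). *)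

theory Defs
  imports Complex_Main "HOL-Library.Extended_Real" "HOL-Library.Countable_Set"
begin

text \<open>The discrete group G is a type of class group_add (written additively,
 not assumed commutative): product xy is x + y, inverse is -x, unit is 0.\<close>

definition supp :: "('a \<Rightarrow> complex) \<Rightarrow> 'a set" where
  "supp f = {x. f x \<noteq> 0}"

definition fin_supp :: "('a \<Rightarrow> complex) \<Rightarrow> bool" where
  "fin_supp f \<longleftrightarrow> finite (supp f)"

definition amenable_group :: "'g::group_add itself \<Rightarrow> bool" where
  "amenable_group _ \<longleftrightarrow> (\<forall>F::'g set. \<forall>\<epsilon>>0. finite F \<longrightarrow>
     (\<exists>S. finite S \<and> S \<noteq> {} \<and> (\<forall>g\<in>F.
        real (card (((+) g ` S) - S) + card (S - ((+) g ` S))) < \<epsilon> * real (card S))))"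

definition normalized_2cocycle :: "('g::group_add \<Rightarrow> 'g \<Rightarrow> complex) \<Rightarrow> bool" where
  "normalized_2cocycle \<sigma> \<longleftrightarrow>
     (\<forall>x y. cmod (\<sigma> x y) = 1) \<and>
     (\<forall>x y z. \<sigma> x y * \<sigma> (x + y) z = \<sigma> x (y + z) * \<sigma> y z) \<and>
     (\<forall>x. \<sigma> 0 x = 1 \<and> \<sigma> x 0 = 1)"

definition length_function :: "('g::group_add \<Rightarrow> real) \<Rightarrow> bool" where
  "length_function l \<longleftrightarrow> (\<forall>s. l s \<ge> 0) \<and> l 0 = 0 \<and> (\<forall>s. l (- s) = l s) \<and>
     (\<forall>s t. l (s + t) \<le> l s + l t)"

definition proper_length :: "('g::group_add \<Rightarrow> real) \<Rightarrow> bool" where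
  "proper_length l \<longleftrightarrow> length_function l \<and> (\<forall>r. finite {s. l s \<le> r})"

definition P1 :: "('g::group_add \<Rightarrow> complex) set" where
  "P1 = {\<phi>. \<phi> 0 = 1 \<and> (\<forall>n (gs::nat \<Rightarrow> 'g) (cs::nat \<Rightarrow> complex).
      (\<Sum>i<n. \<Sum>j<n. cnj (cs i) * cs j * \<phi> (- gs i + gs j)) \<in> \<real> \<and>
      Re (\<Sum>i<n. \<Sum>j<n. cnj (cs i) * cs j * \<phi> (- gs i + gs j)) \<ge> 0)}"

definition twconv :: "('g::group_add \<Rightarrow> 'g \<Rightarrow> complex) \<Rightarrow> ('g \<Rightarrow> complex) \<Rightarrow> ('g \<Rightarrow> complex) \<Rightarrow> 'g \<Rightarrow> complex" where
  "twconv \<sigma> f1 f2 x = (\<Sum>y\<in>supp f1. f1 y * f2 (- y + x) * \<sigma> y (- y + x))"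

definition delta :: "'g \<Rightarrow> 'g \<Rightarrow> complex" where
  "delta g = (\<lambda>x. if x = g then 1 else 0)"

definition tau :: "('g::group_add \<Rightarrow> complex) \<Rightarrow> complex" where
  "tau f = f 0"

text \<open>Schur multiplier M_phi on C_c(G,sigma): M_phi(lambda_g) = phi(g) lambda_g.\<close>
definition Mphi :: "('g \<Rightarrow> complex) \<Rightarrow> ('g \<Rightarrow> complex) \<Rightarrow> ('g \<Rightarrow> complex)" where
  "Mphi \<phi> f = (\<lambda>g. \<phi> g * f g)"

text \<open>An element of the algebraic tensor product
  lambda(C_c(G,sigma)) (.) lambda(C_c(G,sigma))^op is encoded by a finitely supported
  c : G x G -> C, standing for  sum c(g,h) lambda_g (x) (lambda_h)^op.
  Its action on l^2(G) (x) l^2(G) through lambda^sigma (x) rho^sigma, on a vector xi:\<close>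
definition tens_act :: "('g::group_add \<Rightarrow> 'g \<Rightarrow> complex) \<Rightarrow> ('g \<times> 'g \<Rightarrow> complex) \<Rightarrow> ('g \<times> 'g \<Rightarrow> complex) \<Rightarrow> ('g \<times> 'g \<Rightarrow> complex)" where
  "tens_act \<sigma> c \<xi> = (\<lambda>(u, v). \<Sum>p\<in>supp c. c p * \<sigma> (fst p) (- fst p + u) * \<sigma> (v - snd p) (snd p)
                                    * \<xi> (- fst p + u, v - snd p))"

definition l2norm :: "('a \<Rightarrow> complex) \<Rightarrow> real" where
  "l2norm \<xi> = sqrt (\<Sum>p\<in>supp \<xi>. (cmod (\<xi> p))^2)"

text \<open>partial_l (x) 1 +- i 1 (x) partial_l, on finitely supported vectors.\<close>
definition Dplus :: "('g \<Rightarrow> real) \<Rightarrow> ('g \<times> 'g \<Rightarrow> complex) \<Rightarrow> ('g \<times> 'g \<Rightarrow> complex)" where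
  "Dplus l \<xi> = (\<lambda>(u, v). (complex_of_real (l u) + \<i> * complex_of_real (l v)) * \<xi> (u, v))"

definition Dminus :: "('g \<Rightarrow> real) \<Rightarrow> ('g \<times> 'g \<Rightarrow> complex) \<Rightarrow> ('g \<times> 'g \<Rightarrow> complex)" where
  "Dminus l \<xi> = (\<lambda>(u, v). (complex_of_real (l u) - \<i> * complex_of_real (l v)) * \<xi> (u, v))"

definition commut :: "(('a \<Rightarrow> complex) \<Rightarrow> ('a \<Rightarrow> complex)) \<Rightarrow> (('a \<Rightarrow> complex) \<Rightarrow> ('a \<Rightarrow> complex))
     \<Rightarrow> ('a \<Rightarrow> complex) \<Rightarrow> ('a \<Rightarrow> complex)" where
  "commut D X \<xi> = (\<lambda>p. D (X \<xi>) p - X (D \<xi>) p)"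

text \<open>Lipschitz seminorm L(x) = || [partial_l x partial_l, x] || for x in the algebraic
  tensor product (x acting diagonally on the direct sum of two copies).  The norm of
  the (bounded) commutator is computed on the dense core of finitely supported vectors.\<close>
definition LipL :: "('g::group_add \<Rightarrow> 'g \<Rightarrow> complex) \<Rightarrow> ('g \<Rightarrow> real) \<Rightarrow> ('g \<times> 'g \<Rightarrow> complex) \<Rightarrow> ereal" where
  "LipL \<sigma> l c = Sup { ereal (sqrt ((l2norm (commut (Dplus l) (tens_act \<sigma> c) \<xi>2))^2
                                  + (l2norm (commut (Dminus l) (tens_act \<sigma> c) \<xi>1))^2))
                      | \<xi>1 \<xi>2. fin_supp \<xi>1 \<and> fin_supp \<xi>2 \<and> (l2norm \<xi>1)^2 + (l2norm \<xi>2)^2 \<le> 1 }"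

text \<open>omega^min_tau(F) evaluated on the algebraic tensor product:
  a (x) b^op |-> tau(F(a) b), extended linearly.\<close>
definition omega :: "('g::group_add \<Rightarrow> 'g \<Rightarrow> complex) \<Rightarrow> (('g \<Rightarrow> complex) \<Rightarrow> ('g \<Rightarrow> complex))
     \<Rightarrow> ('g \<times> 'g \<Rightarrow> complex) \<Rightarrow> complex" where
  "omega \<sigma> F c = (\<Sum>p\<in>supp c. c p * tau (twconv \<sigma> (F (delta (fst p))) (delta (snd p))))"

text \<open>Delta^min_{tau,L}(F,G) = mk_L(omega(F), omega(G)); L is infinite outside the
  algebraic tensor product, so only those elements enter the supremum.\<close>
definition DeltaMin :: "('g::group_add \<Rightarrow> 'g \<Rightarrow> complex) \<Rightarrow> ('g \<Rightarrow> real)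
     \<Rightarrow> (('g \<Rightarrow> complex) \<Rightarrow> ('g \<Rightarrow> complex)) \<Rightarrow> (('g \<Rightarrow> complex) \<Rightarrow> ('g \<Rightarrow> complex)) \<Rightarrow> ereal" where
  "DeltaMin \<sigma> l F G = Sup { ereal (cmod (omega \<sigma> F c - omega \<sigma> G c)) | c. fin_supp c \<and> LipL \<sigma> l c \<le> 1 }"

end

theory Submission
  imports Defs "HOL-Analysis.L2_Norm"
begin

definition qf :: "'a set \<Rightarrow> ('a \<Rightarrow> 'a \<Rightarrow> complex) \<Rightarrow> ('a \<Rightarrow> complex) \<Rightarrow> complex" where
  "qf S K c = (\<Sum>x\<in>S. \<Sum>y\<in>S. cnj (c x) * c y * K x y)"

definition psd_on :: "'a set \<Rightarrow> ('a \<Rightarrow> 'a \<Rightarrow> complex) \<Rightarrow> bool" where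
  "psd_on S K \<longleftrightarrow> (\<forall>c. qf S K c \<in> \<real> \<and> 0 \<le> Re (qf S K c))"

lemma sum_single:
  assumes "finite S" "x \<in> S" "\<And>z. z \<in> S \<Longrightarrow> z \<noteq> x \<Longrightarrow> f z = 0"
  shows "sum f S = f x"
proof -
  have "sum f {x} = sum f S"
    by (rule sum.mono_neutral_left) (use assms in auto)
  then show ?thesis by simp
qed

lemma sum_two:
  assumes "finite S" "x \<in> S" "y \<in> S" "x \<noteq> y" "\<And>z. z \<in> S \<Longrightarrow> z \<noteq> x \<Longrightarrow> z \<noteq> y \<Longrightarrow> f z = 0"
  shows "sum f S = f x + f y"
proof -
  have "sum f {x, y} = sum f S"
    by (rule sum.mono_neutral_left) (use assms in auto)
  then show ?thesis using assms by simp
qed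

lemma qf_two:
  assumes "finite S" "x \<in> S" "y \<in> S" "x \<noteq> y"
  shows "qf S K (\<lambda>z. if z = x then \<alpha> else if z = y then \<beta> else 0) =
     cnj \<alpha> * \<alpha> * K x x + cnj \<alpha> * \<beta> * K x y + cnj \<beta> * \<alpha> * K y x + cnj \<beta> * \<beta> * K y y"
proof -
  let ?c = "\<lambda>z. if z = x then \<alpha> else if z = y then \<beta> else 0"
  have inner: "(\<Sum>w\<in>S. cnj (?c z) * ?c w * K z w) = cnj (?c z) * \<alpha> * K z x + cnj (?c z) * \<beta> * K z y" for z
    by (subst sum_two[OF assms]) (use assms in auto)
  have "qf S K ?c = (\<Sum>z\<in>S. cnj (?c z) * \<alpha> * K z x + cnj (?c z) * \<beta> * K z y)"
    unfolding qf_def using inner by simp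
  also have "\<dots> = cnj \<alpha> * \<alpha> * K x x + cnj \<alpha> * \<beta> * K x y + (cnj \<beta> * \<alpha> * K y x + cnj \<beta> * \<beta> * K y y)"
    by (subst sum_two[OF assms]) (use assms in auto)
  finally show ?thesis by (simp add: algebra_simps)
qed

lemma qf_one:
  assumes "finite S" "x \<in> S"
  shows "qf S K (\<lambda>z. if z = x then 1 else 0) = K x x"
proof -
  let ?c = "\<lambda>z. if z = x then (1::complex) else 0"
  have inner: "(\<Sum>w\<in>S. cnj (?c z) * ?c w * K z w) = cnj (?c z) * K z x" for z
    by (subst sum_single[OF assms]) (use assms in auto)
  show ?thesis unfolding qf_def inner
    by (subst sum_single[OF assms]) (use assms in auto)
qed

lemma psd_diag:
  assumes "finite S" "psd_on S K" "x \<in> S"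
  shows "K x x \<in> \<real>" "0 \<le> Re (K x x)"
  using assms qf_one[OF assms(1,3), of K] unfolding psd_on_def by metis+

lemma psd_herm:
  assumes "finite S" "psd_on S K" "x \<in> S" "y \<in> S"
  shows "K y x = cnj (K x y)"
proof (cases "x = y")
  case True
  then show ?thesis using psd_diag[OF assms(1,2,3)] by (simp add: complex_eq_iff complex_is_Real_iff)
next
  case False
  have 1: "qf S K (\<lambda>z. if z = x then 1 else if z = y then 1 else 0) \<in> \<real>"
    using assms(2) unfolding psd_on_def by blast
  have 2: "qf S K (\<lambda>z. if z = x then 1 else if z = y then \<i> else 0) \<in> \<real>"
    using assms(2) unfolding psd_on_def by blast
  have dx: "Im (K x x) = 0" and dy: "Im (K y y) = 0"
    using psd_diag[OF assms(1,2)] assms(3,4) by (auto simp: complex_is_Real_iff)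
  from 1 have a: "Im (K x y) + Im (K y x) = 0"
    unfolding qf_two[OF assms(1,3,4) False] using dx dy by (simp add: complex_is_Real_iff)
  from 2 have b: "Re (K x y) - Re (K y x) = 0"
    unfolding qf_two[OF assms(1,3,4) False] using dx dy by (simp add: complex_is_Real_iff)
  show ?thesis using a b by (simp add: complex_eq_iff)
qed

lemma psd_zero_row:
  assumes "finite S" "psd_on S K" "x \<in> S" "y \<in> S" "K x x = 0"
  shows "K x y = 0"
proof (rule ccontr)
  assume ne: "K x y \<noteq> 0"
  then have xy: "x \<noteq> y" using assms by auto
  define w where "w = K x y"
  define r where "r = (Re (K y y) + 1) / (2 * (Re w ^ 2 + Im w ^ 2))"
  have pos: "Re w ^ 2 + Im w ^ 2 > 0" using ne unfolding w_def
    by (simp add: complex_eq_iff sum_power2_gt_zero_iff)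
  have h: "K y x = cnj w" using psd_herm[OF assms(1-4)] w_def by simp
  have "0 \<le> Re (qf S K (\<lambda>z. if z = x then - (of_real r * w) else if z = y then 1 else 0))"
    using assms(2) unfolding psd_on_def by blast
  then have "0 \<le> - 2 * r * (Re w ^ 2 + Im w ^ 2) + Re (K y y)"
    unfolding qf_two[OF assms(1,3,4) xy] h using assms(5) w_def
    by (simp add: algebra_simps power2_eq_square)
  moreover have "2 * r * (Re w ^ 2 + Im w ^ 2) = Re (K y y) + 1"
    unfolding r_def using pos by (simp add: field_simps)
  ultimately show False by linarith
qed

lemma psd_subset:
  assumes "finite S" "psd_on S K" "F \<subseteq> S"
  shows "psd_on F K"
  unfolding psd_on_def
proof
  fix c :: "'a \<Rightarrow> complex"
  let ?c = "\<lambda>z. if z \<in> F then c z else 0"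
  have fF: "finite F" using assms finite_subset by blast
  have inner: "(\<Sum>y\<in>S. cnj (?c x) * ?c y * K x y) = (\<Sum>y\<in>F. cnj (?c x) * ?c y * K x y)" for x
    by (rule sum.mono_neutral_right) (use assms fF in auto)
  have "qf S K ?c = (\<Sum>x\<in>F. \<Sum>y\<in>F. cnj (?c x) * ?c y * K x y)"
    unfolding qf_def inner
    by (rule sum.mono_neutral_right) (use assms fF in auto)
  also have "\<dots> = qf F K c" unfolding qf_def
    by (intro sum.cong) auto
  finally show "qf F K c \<in> \<real> \<and> 0 \<le> Re (qf F K c)"
    using assms(2) unfolding psd_on_def by metis
qed

lemma cholesky_aux:
  assumes "finite S"
  shows "\<forall>K. psd_on S K \<longrightarrow> (\<exists>a. \<forall>x\<in>S. \<forall>y\<in>S. K x y = (\<Sum>k\<in>S. cnj (a k x) * a k y))"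
  using assms
proof (induction S rule: finite_induct)
  case empty
  then show ?case by simp
next
  case (insert x0 F)
  show ?case
  proof (intro allI impI)
    fix K :: "'a \<Rightarrow> 'a \<Rightarrow> complex"
    assume psd: "psd_on (insert x0 F) K"
    let ?S = "insert x0 F"
    have fS: "finite ?S" using insert by simp
    define d where "d = Re (K x0 x0)"
    have d0: "d \<ge> 0" and Kd: "K x0 x0 = of_real d"
      using psd_diag[OF fS psd, of x0] unfolding d_def
      by (auto simp: complex_eq_iff complex_is_Real_iff)
    have herm: "\<And>x y. x \<in> ?S \<Longrightarrow> y \<in> ?S \<Longrightarrow> K y x = cnj (K x y)"
      using psd_herm[OF fS psd] by blast
    define b where "b y = (if d > 0 then K x0 y / of_real (sqrt d) else 0)" for y
    define K' where "K' x y = K x y - cnj (b x) * b y" for x y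
    have psd': "psd_on F K'"
    proof (cases "d > 0")
      case False
      then have "K' = K" unfolding K'_def b_def by (simp add: fun_eq_iff)
      then show ?thesis using psd_subset[OF fS psd] by auto
    next
      case dpos: True
      show ?thesis unfolding psd_on_def
      proof
        fix c :: "'a \<Rightarrow> complex"
        define s where "s = (\<Sum>y\<in>F. c y * K x0 y)"
        define c' where "c' = c(x0 := - s / of_real d)"
        have c'F: "\<And>z. z \<in> F \<Longrightarrow> c' z = c z" unfolding c'_def using insert by auto
        have c'0: "c' x0 = - s / of_real d" unfolding c'_def by simp
        let ?Q = "(\<Sum>x\<in>F. \<Sum>y\<in>F. cnj (c x) * c y * K x y)"
        have row: "(\<Sum>y\<in>?S. cnj (c' x) * c' y * K x y) =
              cnj (c' x) * c' x0 * K x x0 + (\<Sum>y\<in>F. cnj (c' x) * c y * K x y)" for x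
          using insert c'F by (simp add: sum.insert)
        have hs: "(\<Sum>x\<in>F. cnj (c x) * K x x0) = cnj s"
          unfolding s_def cnj_sum by (intro sum.cong refl) (simp add: herm[OF insertI1])
        have "qf ?S K c' = (\<Sum>x\<in>?S. cnj (c' x) * c' x0 * K x x0 + (\<Sum>y\<in>F. cnj (c' x) * c y * K x y))"
          unfolding qf_def row ..
        also have "\<dots> = (cnj (c' x0) * c' x0 * K x0 x0 + (\<Sum>y\<in>F. cnj (c' x0) * c y * K x0 y))
             + (\<Sum>x\<in>F. cnj (c x) * c' x0 * K x x0 + (\<Sum>y\<in>F. cnj (c x) * c y * K x y))"
          using insert c'F by (simp add: sum.insert)
        also have "\<dots> = cnj (c' x0) * c' x0 * K x0 x0 + cnj (c' x0) * s
             + c' x0 * (\<Sum>x\<in>F. cnj (c x) * K x x0) + ?Q"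
          unfolding s_def by (simp add: sum.distrib sum_distrib_left algebra_simps)
        also have "\<dots> = cnj (c' x0) * c' x0 * K x0 x0 + cnj (c' x0) * s
             + c' x0 * cnj s + ?Q"
          using hs by simp
        finally have e1: "qf ?S K c' = ?Q - cnj s * s / of_real d"
          unfolding c'0 Kd using dpos by (simp add: field_simps)
        have sqd: "(complex_of_real (sqrt d))\<^sup>2 = complex_of_real d"
        proof -
          have "complex_of_real (sqrt d ^ 2) = complex_of_real d" using d0 by simp
          then show ?thesis by (simp only: of_real_power)
        qed
        have bsum: "(\<Sum>y\<in>F. c y * b y) = s / of_real (sqrt d)"
          unfolding s_def b_def using dpos by (simp add: sum_divide_distrib algebra_simps)
        have "qf F K' c = ?Q - (\<Sum>x\<in>F. \<Sum>y\<in>F. cnj (c x * b x) * (c y * b y))"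
          unfolding qf_def K'_def by (simp add: sum_subtractf algebra_simps)
        also have "\<dots> = ?Q - cnj (\<Sum>y\<in>F. c y * b y) * (\<Sum>y\<in>F. c y * b y)"
          by (simp add: sum_product cnj_sum)
        also have "\<dots> = ?Q - cnj s * s / (of_real (sqrt d) * of_real (sqrt d))"
          unfolding bsum by simp
        also have "\<dots> = ?Q - cnj s * s / of_real d"
          using sqd by (simp add: power2_eq_square)
        finally have "qf F K' c = qf ?S K c'" using e1 by simp
        then show "qf F K' c \<in> \<real> \<and> 0 \<le> Re (qf F K' c)"
          using psd unfolding psd_on_def by metis
      qed
    qed
    obtain a' where a': "\<And>x y. x \<in> F \<Longrightarrow> y \<in> F \<Longrightarrow> K' x y = (\<Sum>k\<in>F. cnj (a' k x) * a' k y)"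
      using insert.IH psd' by blast
    define a where "a k y = (if k = x0 then b y else if y = x0 then 0 else a' k y)" for k y
    have zr: "d = 0 \<Longrightarrow> y \<in> ?S \<Longrightarrow> K x0 y = 0" for y
      using psd_zero_row[OF fS psd, of x0 y] Kd by simp
    have b0: "d > 0 \<Longrightarrow> b x0 = of_real (sqrt d)"
      unfolding b_def Kd
    proof -
      assume "d > 0"
      have "(of_real d / of_real (sqrt d) :: complex) = of_real (d / sqrt d)" by simp
      also have "\<dots> = of_real (sqrt d)" using real_div_sqrt[OF d0] by simp
      finally show "(if 0 < d then complex_of_real d / complex_of_real (sqrt d) else 0) = complex_of_real (sqrt d)"
        using \<open>d > 0\<close> by simp
    qed
    show "\<exists>a. \<forall>x\<in>?S. \<forall>y\<in>?S. K x y = (\<Sum>k\<in>?S. cnj (a k x) * a k y)"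
    proof (intro exI ballI)
      fix x y assume x: "x \<in> ?S" and y: "y \<in> ?S"
      have sumS: "(\<Sum>k\<in>?S. cnj (a k x) * a k y) = cnj (b x) * b y + (\<Sum>k\<in>F. cnj (a k x) * a k y)"
        using insert unfolding a_def by (simp add: sum.insert)
      show "K x y = (\<Sum>k\<in>?S. cnj (a k x) * a k y)"
      proof (cases "x = x0 \<or> y = x0")
        case False
        then have "x \<in> F" "y \<in> F" using x y by auto
        moreover have "(\<Sum>k\<in>F. cnj (a k x) * a k y) = (\<Sum>k\<in>F. cnj (a' k x) * a' k y)"
          using False insert unfolding a_def by (intro sum.cong) auto
        ultimately have h: "K x y - cnj (b x) * b y = (\<Sum>k\<in>F. cnj (a k x) * a k y)"
          using a' unfolding K'_def by simp
        show ?thesis unfolding sumS h[symmetric] by simp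
      next
        case True
        then have "(\<Sum>k\<in>F. cnj (a k x) * a k y) = 0"
          using insert unfolding a_def by (intro sum.neutral) auto
        then have sS: "(\<Sum>k\<in>?S. cnj (a k x) * a k y) = cnj (b x) * b y" unfolding sumS by simp
        show ?thesis
        proof (cases "d > 0")
          case dpos: True
          have sd: "sqrt d \<noteq> 0" using dpos by simp
          show ?thesis
          proof (cases "x = x0")
            case True
            then show ?thesis unfolding sS using b0[OF dpos] sd unfolding b_def using dpos
              by (simp add: field_simps)
          next
            case False
            then have yy: "y = x0" using \<open>x = x0 \<or> y = x0\<close> by simp
            have "K x x0 = cnj (b x) * b x0"
              using b0[OF dpos] sd herm[OF insertI1 x] unfolding b_def using dpos
              by (simp add: field_simps)
            then show ?thesis using sS yy by simp
          qed
        next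
          case False
          then have d00: "d = 0" using d0 by simp
          show ?thesis
          proof (cases "x = x0")
            case True
            then show ?thesis unfolding sS using zr[OF d00 y] False unfolding b_def by simp
          next
            case False
            then have yy: "y = x0" using \<open>x = x0 \<or> y = x0\<close> by simp
            have "K x x0 = cnj (b x) * b x0"
              using zr[OF d00 x] herm[OF insertI1 x] \<open>\<not> d > 0\<close> unfolding b_def by simp
            then show ?thesis using sS yy by simp
          qed
        qed
      qed
    qed
  qed
qed

lemma cholesky:
  assumes "finite S" "psd_on S K"
  obtains a where "\<And>x y. x \<in> S \<Longrightarrow> y \<in> S \<Longrightarrow> K x y = (\<Sum>k\<in>S. cnj (a k x) * a k y)"
  using cholesky_aux[OF assms(1)] assms(2) by blast

definition Dm :: "('b \<Rightarrow> complex) \<Rightarrow> ('b \<Rightarrow> complex) \<Rightarrow> ('b \<Rightarrow> complex)" where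
  "Dm dd \<xi> = (\<lambda>p. dd p * \<xi> p)"

definition dplus :: "('g \<Rightarrow> real) \<Rightarrow> 'g \<times> 'g \<Rightarrow> complex" where
  "dplus l p = complex_of_real (l (fst p)) + \<i> * complex_of_real (l (snd p))"

definition dminus :: "('g \<Rightarrow> real) \<Rightarrow> 'g \<times> 'g \<Rightarrow> complex" where
  "dminus l p = complex_of_real (l (fst p)) - \<i> * complex_of_real (l (snd p))"

lemma Dplus_eq: "Dplus l = Dm (dplus l)"
  by (auto simp: fun_eq_iff Dplus_def Dm_def dplus_def split: prod.split)

lemma Dminus_eq: "Dminus l = Dm (dminus l)"
  by (auto simp: fun_eq_iff Dminus_def Dm_def dminus_def split: prod.split)

definition mulf :: "('g \<Rightarrow> complex) \<Rightarrow> ('g \<times> 'g \<Rightarrow> complex) \<Rightarrow> ('g \<times> 'g \<Rightarrow> complex)" where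
  "mulf a \<xi> = (\<lambda>p. a (fst p) * \<xi> p)"

lemma tens_act_app:
  "tens_act \<sigma> c \<xi> (u, v) = (\<Sum>p\<in>supp c. c p * \<sigma> (fst p) (- fst p + u) * \<sigma> (v - snd p) (snd p)
                                    * \<xi> (- fst p + u, v - snd p))"
  by (simp add: tens_act_def)

definition img :: "('g::group_add \<times> 'g \<Rightarrow> complex) \<Rightarrow> ('g \<times> 'g) set \<Rightarrow> ('g \<times> 'g) set" where
  "img c A = (\<lambda>(p, s). (fst p + fst s, snd s + snd p)) ` (supp c \<times> A)"

lemma img_mono: "A \<subseteq> A' \<Longrightarrow> supp c \<subseteq> supp c' \<Longrightarrow> img c A \<subseteq> img c' A'"
  unfolding img_def by blast

lemma img_finite: "finite (supp c) \<Longrightarrow> finite A \<Longrightarrow> finite (img c A)"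
  unfolding img_def by simp

lemma supp_tens: "supp (tens_act \<sigma> c \<xi>) \<subseteq> img c (supp \<xi>)"
proof
  fix q assume q: "q \<in> supp (tens_act \<sigma> c \<xi>)"
  obtain u v where qe: "q = (u, v)" by fastforce
  from q have "tens_act \<sigma> c \<xi> (u, v) \<noteq> 0" unfolding qe supp_def by simp
  then have "(\<Sum>p\<in>supp c. c p * \<sigma> (fst p) (- fst p + u) * \<sigma> (v - snd p) (snd p)
                                    * \<xi> (- fst p + u, v - snd p)) \<noteq> 0"
    unfolding tens_act_app .
  from sum.not_neutral_contains_not_neutral[OF this] obtain p where p: "p \<in> supp c"
    and ne0: "c p * \<sigma> (fst p) (- fst p + u) * \<sigma> (v - snd p) (snd p) * \<xi> (- fst p + u, v - snd p) \<noteq> 0"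
    by blast
  from ne0 have ne: "\<xi> (- fst p + u, v - snd p) \<noteq> 0" by auto
  have "(u, v) = (\<lambda>(p, s). (fst p + fst s, snd s + snd p)) (p, (- fst p + u, v - snd p))"
    by (simp add: add.assoc[symmetric])
  moreover have "(p, (- fst p + u, v - snd p)) \<in> supp c \<times> supp \<xi>"
    using p ne by (simp add: supp_def)
  ultimately show "q \<in> img c (supp \<xi>)" unfolding img_def qe by (rule rev_image_eqI[rotated])
qed

lemma supp_Dm: "supp (Dm dd \<xi>) \<subseteq> supp \<xi>"
  by (auto simp: supp_def Dm_def)

lemma supp_mulf: "supp (mulf a \<xi>) \<subseteq> supp \<xi>"
  by (auto simp: supp_def mulf_def)

lemma supp_commut: "supp (commut (Dm dd) (tens_act \<sigma> c) \<xi>) \<subseteq> img c (supp \<xi>)"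
proof
  fix q assume q: "q \<in> supp (commut (Dm dd) (tens_act \<sigma> c) \<xi>)"
  then have "tens_act \<sigma> c \<xi> q \<noteq> 0 \<or> tens_act \<sigma> c (Dm dd \<xi>) q \<noteq> 0"
    by (auto simp: supp_def commut_def Dm_def)
  then show "q \<in> img c (supp \<xi>)"
  proof
    assume "tens_act \<sigma> c \<xi> q \<noteq> 0"
    then show ?thesis using supp_tens[of \<sigma> c \<xi>] unfolding supp_def by blast
  next
    assume "tens_act \<sigma> c (Dm dd \<xi>) q \<noteq> 0"
    then have "q \<in> img c (supp (Dm dd \<xi>))" using supp_tens[of \<sigma> c "Dm dd \<xi>"] unfolding supp_def by blast
    then show ?thesis using img_mono[OF supp_Dm order_refl] by blast
  qed
qed

lemma grp_cancel: "(u::'g::group_add) - (- g + u) = g"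
  by (simp add: diff_conv_add_uminus minus_add add.assoc[symmetric])

lemma factor_tens:
  assumes fc: "finite (supp c)"
    and fac: "\<And>x y. x \<in> S \<Longrightarrow> y \<in> S \<Longrightarrow> \<chi> (x - y) = (\<Sum>k\<in>I. cnj (a k x) * a k y)"
    and sz: "fst ` supp \<zeta> \<subseteq> S" and u: "u \<in> S"
  shows "tens_act \<sigma> (\<lambda>p. c p * \<chi> (fst p)) \<zeta> (u, v)
       = (\<Sum>k\<in>I. cnj (a k u) * tens_act \<sigma> c (mulf (a k) \<zeta>) (u, v))"
proof -
  let ?c' = "\<lambda>p. c p * \<chi> (fst p)"
  let ?t = "\<lambda>p. c p * \<sigma> (fst p) (- fst p + u) * \<sigma> (v - snd p) (snd p)"
  have "tens_act \<sigma> ?c' \<zeta> (u, v) = (\<Sum>p\<in>supp ?c'. ?c' p * \<sigma> (fst p) (- fst p + u) * \<sigma> (v - snd p) (snd p)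
                                    * \<zeta> (- fst p + u, v - snd p))"
    by (rule tens_act_app)
  also have "\<dots> = (\<Sum>p\<in>supp c. ?c' p * \<sigma> (fst p) (- fst p + u) * \<sigma> (v - snd p) (snd p)
                                    * \<zeta> (- fst p + u, v - snd p))"
    by (rule sum.mono_neutral_left) (use fc in \<open>auto simp: supp_def\<close>)
  also have "\<dots> = (\<Sum>p\<in>supp c. \<Sum>k\<in>I. cnj (a k u) * (?t p * (a k (- fst p + u) * \<zeta> (- fst p + u, v - snd p))))"
  proof (rule sum.cong[OF refl])
    fix p assume p: "p \<in> supp c"
    show "?c' p * \<sigma> (fst p) (- fst p + u) * \<sigma> (v - snd p) (snd p) * \<zeta> (- fst p + u, v - snd p)
        = (\<Sum>k\<in>I. cnj (a k u) * (?t p * (a k (- fst p + u) * \<zeta> (- fst p + u, v - snd p))))"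
    proof (cases "\<zeta> (- fst p + u, v - snd p) = 0")
      case True
      then show ?thesis by simp
    next
      case False
      then have m: "(- fst p + u, v - snd p) \<in> supp \<zeta>" by (simp add: supp_def)
      have "fst (- fst p + u, v - snd p) \<in> fst ` supp \<zeta>" using m by (rule imageI)
      then have uS: "- fst p + u \<in> S" using sz by auto
      have "\<chi> (fst p) = (\<Sum>k\<in>I. cnj (a k u) * a k (- fst p + u))"
        using fac[OF u uS] unfolding grp_cancel .
      then show ?thesis by (simp add: sum_distrib_left sum_distrib_right algebra_simps)
    qed
  qed
  also have "\<dots> = (\<Sum>k\<in>I. \<Sum>p\<in>supp c. cnj (a k u) * (?t p * (a k (- fst p + u) * \<zeta> (- fst p + u, v - snd p))))"
    by (rule sum.swap)
  also have "\<dots> = (\<Sum>k\<in>I. cnj (a k u) * tens_act \<sigma> c (mulf (a k) \<zeta>) (u, v))"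
    unfolding tens_act_app mulf_def by (simp add: sum_distrib_left algebra_simps)
  finally show ?thesis .
qed

lemma factor_commut:
  assumes fc: "finite (supp c)"
    and fac: "\<And>x y. x \<in> S \<Longrightarrow> y \<in> S \<Longrightarrow> \<chi> (x - y) = (\<Sum>k\<in>I. cnj (a k x) * a k y)"
    and sz: "fst ` supp \<xi> \<subseteq> S" and u: "u \<in> S"
  shows "commut (Dm dd) (tens_act \<sigma> (\<lambda>p. c p * \<chi> (fst p))) \<xi> (u, v)
       = (\<Sum>k\<in>I. cnj (a k u) * commut (Dm dd) (tens_act \<sigma> c) (mulf (a k) \<xi>) (u, v))"
proof -
  have sz2: "fst ` supp (Dm dd \<xi>) \<subseteq> S" using sz supp_Dm[of dd \<xi>] by blast
  have mc: "mulf (a k) (Dm dd \<xi>) = Dm dd (mulf (a k) \<xi>)" for k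
    by (simp add: fun_eq_iff mulf_def Dm_def)
  have cm: "commut (Dm dd) X \<zeta> (u, v) = dd (u, v) * X \<zeta> (u, v) - X (Dm dd \<zeta>) (u, v)" for X \<zeta>
    by (simp add: commut_def Dm_def)
  have e1: "tens_act \<sigma> (\<lambda>p. c p * \<chi> (fst p)) \<xi> (u, v)
       = (\<Sum>k\<in>I. cnj (a k u) * tens_act \<sigma> c (mulf (a k) \<xi>) (u, v))"
    by (rule factor_tens[where S=S]) (use fc fac sz u in auto)
  have e2: "tens_act \<sigma> (\<lambda>p. c p * \<chi> (fst p)) (Dm dd \<xi>) (u, v)
       = (\<Sum>k\<in>I. cnj (a k u) * tens_act \<sigma> c (Dm dd (mulf (a k) \<xi>)) (u, v))"
    unfolding mc[symmetric]
    by (rule factor_tens[where S=S]) (use fc fac sz2 u in auto)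
  show ?thesis
    unfolding cm e1 e2
    by (simp add: sum_distrib_left sum_subtractf algebra_simps)
qed

lemma CS_point:
  assumes "finite I" "(\<Sum>k\<in>I. (cmod (a k))\<^sup>2) = 1"
  shows "(cmod (\<Sum>k\<in>I. cnj (a k) * y k))\<^sup>2 \<le> (\<Sum>k\<in>I. (cmod (y k))\<^sup>2)"
proof -
  have "cmod (\<Sum>k\<in>I. cnj (a k) * y k) \<le> (\<Sum>k\<in>I. cmod (cnj (a k) * y k))"
    by (rule norm_sum)
  also have "\<dots> = (\<Sum>k\<in>I. \<bar>cmod (a k)\<bar> * \<bar>cmod (y k)\<bar>)"
    by (simp add: norm_mult)
  also have "\<dots> \<le> L2_set (\<lambda>k. cmod (a k)) I * L2_set (\<lambda>k. cmod (y k)) I"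
    by (rule L2_set_mult_ineq)
  also have "\<dots> = sqrt (\<Sum>k\<in>I. (cmod (y k))\<^sup>2)"
    using assms(2) by (simp add: L2_set_def)
  finally have "cmod (\<Sum>k\<in>I. cnj (a k) * y k) \<le> sqrt (\<Sum>k\<in>I. (cmod (y k))\<^sup>2)" .
  then have "(cmod (\<Sum>k\<in>I. cnj (a k) * y k))\<^sup>2 \<le> (sqrt (\<Sum>k\<in>I. (cmod (y k))\<^sup>2))\<^sup>2"
    by (rule power_mono) simp
  also have "\<dots> = (\<Sum>k\<in>I. (cmod (y k))\<^sup>2)" by (simp add: sum_nonneg)
  finally show ?thesis .
qed

lemma l2norm_sq:
  assumes "finite B" "supp \<xi> \<subseteq> B"
  shows "(l2norm \<xi>)\<^sup>2 = (\<Sum>p\<in>B. (cmod (\<xi> p))\<^sup>2)"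
proof -
  have "(l2norm \<xi>)\<^sup>2 = (\<Sum>p\<in>supp \<xi>. (cmod (\<xi> p))\<^sup>2)"
    unfolding l2norm_def by (simp add: sum_nonneg)
  also have "\<dots> = (\<Sum>p\<in>B. (cmod (\<xi> p))\<^sup>2)"
    by (rule sum.mono_neutral_left) (use assms in \<open>auto simp: supp_def\<close>)
  finally show ?thesis .
qed

lemma comp_bound:
  assumes fB: "finite B" and sB: "supp \<xi> \<subseteq> B" and iB: "img c (supp \<xi>) \<subseteq> B"
    and fc: "finite (supp c)" and SB: "fst ` B \<subseteq> S" and fI: "finite I"
    and fac: "\<And>x y. x \<in> S \<Longrightarrow> y \<in> S \<Longrightarrow> \<chi> (x - y) = (\<Sum>k\<in>I. cnj (a k x) * a k y)"
    and n1: "\<And>u. u \<in> S \<Longrightarrow> (\<Sum>k\<in>I. (cmod (a k u))\<^sup>2) = 1"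
  shows "(l2norm (commut (Dm dd) (tens_act \<sigma> (\<lambda>p. c p * \<chi> (fst p))) \<xi>))\<^sup>2
     \<le> (\<Sum>k\<in>I. (l2norm (commut (Dm dd) (tens_act \<sigma> c) (mulf (a k) \<xi>)))\<^sup>2)"
proof -
  let ?c' = "\<lambda>p. c p * \<chi> (fst p)"
  let ?T' = "commut (Dm dd) (tens_act \<sigma> ?c') \<xi>"
  let ?T = "\<lambda>k. commut (Dm dd) (tens_act \<sigma> c) (mulf (a k) \<xi>)"
  have sc': "supp ?c' \<subseteq> supp c" by (auto simp: supp_def)
  have s1: "supp ?T' \<subseteq> B"
    using supp_commut[of dd \<sigma> ?c' \<xi>] img_mono[where A="supp \<xi>" and A'="supp \<xi>", OF order_refl sc'] iB by blast
  have s2: "supp (?T k) \<subseteq> B" for k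
    using supp_commut[of dd \<sigma> c "mulf (a k) \<xi>"] img_mono[where A="supp (mulf (a k) \<xi>)" and A'="supp \<xi>" and c=c and c'=c, OF supp_mulf order_refl] iB by blast
  have sz: "fst ` supp \<xi> \<subseteq> S" using sB SB by blast
  have pt: "(cmod (?T' q))\<^sup>2 \<le> (\<Sum>k\<in>I. (cmod (?T k q))\<^sup>2)" if q: "q \<in> B" for q
  proof -
    obtain u v where qe: "q = (u, v)" by fastforce
    have u: "u \<in> S" using q SB qe by force
    have "?T' q = (\<Sum>k\<in>I. cnj (a k u) * ?T k q)"
      unfolding qe by (rule factor_commut[where S=S]) (use fc fac sz u in auto)
    then show ?thesis using CS_point[OF fI n1[OF u], of "\<lambda>k. ?T k q"] by simp
  qed
  have "(l2norm ?T')\<^sup>2 = (\<Sum>q\<in>B. (cmod (?T' q))\<^sup>2)" by (rule l2norm_sq[OF fB s1])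
  also have "\<dots> \<le> (\<Sum>q\<in>B. \<Sum>k\<in>I. (cmod (?T k q))\<^sup>2)" by (rule sum_mono) (rule pt)
  also have "\<dots> = (\<Sum>k\<in>I. \<Sum>q\<in>B. (cmod (?T k q))\<^sup>2)" by (rule sum.swap)
  also have "\<dots> = (\<Sum>k\<in>I. (l2norm (?T k))\<^sup>2)"
    by (rule sum.cong[OF refl]) (rule l2norm_sq[OF fB s2, symmetric])
  finally show ?thesis .
qed

lemma mulf_norm:
  assumes fB: "finite B" and sB: "supp \<xi> \<subseteq> B" and SB: "fst ` B \<subseteq> S"
    and n1: "\<And>u. u \<in> S \<Longrightarrow> (\<Sum>k\<in>I. (cmod (a k u))\<^sup>2) = 1"
  shows "(\<Sum>k\<in>I. (l2norm (mulf (a k) \<xi>))\<^sup>2) = (l2norm \<xi>)\<^sup>2"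
proof -
  have "(\<Sum>k\<in>I. (l2norm (mulf (a k) \<xi>))\<^sup>2) = (\<Sum>k\<in>I. \<Sum>q\<in>B. (cmod (mulf (a k) \<xi> q))\<^sup>2)"
    by (rule sum.cong[OF refl]) (rule l2norm_sq[OF fB order_trans[OF supp_mulf sB]])
  also have "\<dots> = (\<Sum>q\<in>B. \<Sum>k\<in>I. (cmod (a k (fst q)))\<^sup>2 * (cmod (\<xi> q))\<^sup>2)"
    by (subst sum.swap) (simp add: mulf_def norm_mult power_mult_distrib)
  also have "\<dots> = (\<Sum>q\<in>B. (cmod (\<xi> q))\<^sup>2)"
  proof (rule sum.cong[OF refl])
    fix q assume "q \<in> B"
    then have "fst q \<in> S" using SB by blast
    then show "(\<Sum>k\<in>I. (cmod (a k (fst q)))\<^sup>2 * (cmod (\<xi> q))\<^sup>2) = (cmod (\<xi> q))\<^sup>2"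
      using n1 by (simp add: sum_distrib_right[symmetric])
  qed
  also have "\<dots> = (l2norm \<xi>)\<^sup>2" by (rule l2norm_sq[OF fB sB, symmetric])
  finally show ?thesis .
qed

lemma l2norm_zero:
  assumes "fin_supp \<xi>" "l2norm \<xi> = 0"
  shows "\<xi> = (\<lambda>p. 0)"
proof -
  have f: "finite (supp \<xi>)" using assms(1) by (simp add: fin_supp_def)
  have "(\<Sum>p\<in>supp \<xi>. (cmod (\<xi> p))\<^sup>2) = 0" using assms(2) unfolding l2norm_def by simp
  then have "\<forall>p\<in>supp \<xi>. (cmod (\<xi> p))\<^sup>2 = 0"
    using sum_nonneg_eq_0_iff[OF f, of "\<lambda>p. (cmod (\<xi> p))\<^sup>2"] by simp
  then show ?thesis by (auto simp: supp_def fun_eq_iff)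
qed

lemma tens_scale: "tens_act \<sigma> c (\<lambda>p. t * \<zeta> p) = (\<lambda>p. t * tens_act \<sigma> c \<zeta> p)"
  by (auto simp: fun_eq_iff tens_act_def sum_distrib_left algebra_simps)

lemma commut_scale:
  "commut (Dm dd) (tens_act \<sigma> c) (\<lambda>p. t * \<zeta> p) = (\<lambda>p. t * commut (Dm dd) (tens_act \<sigma> c) \<zeta> p)"
proof -
  have "Dm dd (\<lambda>p. t * \<zeta> p) = (\<lambda>p. t * Dm dd \<zeta> p)" by (simp add: Dm_def fun_eq_iff algebra_simps)
  then show ?thesis unfolding commut_def tens_scale by (simp add: Dm_def tens_scale algebra_simps)
qed

lemma l2norm_scale: "l2norm (\<lambda>p. complex_of_real r * \<zeta> p) = \<bar>r\<bar> * l2norm \<zeta>"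
proof (cases "r = 0")
  case True
  then show ?thesis by (simp add: l2norm_def supp_def)
next
  case False
  then have "supp (\<lambda>p. complex_of_real r * \<zeta> p) = supp \<zeta>" by (auto simp: supp_def)
  then have "l2norm (\<lambda>p. complex_of_real r * \<zeta> p) = sqrt (r\<^sup>2 * (\<Sum>p\<in>supp \<zeta>. (cmod (\<zeta> p))\<^sup>2))"
    unfolding l2norm_def by (simp add: norm_mult power_mult_distrib sum_distrib_left)
  also have "\<dots> = \<bar>r\<bar> * l2norm \<zeta>" unfolding l2norm_def by (simp add: real_sqrt_mult)
  finally show ?thesis .
qed

definition Qf :: "('g::group_add \<Rightarrow> 'g \<Rightarrow> complex) \<Rightarrow> ('g \<Rightarrow> real) \<Rightarrow> ('g \<times> 'g \<Rightarrow> complex)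
   \<Rightarrow> ('g \<times> 'g \<Rightarrow> complex) \<Rightarrow> ('g \<times> 'g \<Rightarrow> complex) \<Rightarrow> real" where
  "Qf \<sigma> l c \<xi>1 \<xi>2 = (l2norm (commut (Dplus l) (tens_act \<sigma> c) \<xi>2))\<^sup>2
                    + (l2norm (commut (Dminus l) (tens_act \<sigma> c) \<xi>1))\<^sup>2"

lemma LipL_alt: "LipL \<sigma> l c = Sup {ereal (sqrt (Qf \<sigma> l c \<xi>1 \<xi>2)) | \<xi>1 \<xi>2.
     fin_supp \<xi>1 \<and> fin_supp \<xi>2 \<and> (l2norm \<xi>1)^2 + (l2norm \<xi>2)^2 \<le> 1 }"
  unfolding LipL_def Qf_def ..

lemma Qf_scale: "Qf \<sigma> l c (\<lambda>p. complex_of_real r * \<zeta>1 p) (\<lambda>p. complex_of_real r * \<zeta>2 p)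
   = r\<^sup>2 * Qf \<sigma> l c \<zeta>1 \<zeta>2"
  unfolding Qf_def Dplus_eq Dminus_eq commut_scale l2norm_scale
  by (simp add: power_mult_distrib algebra_simps)

lemma Qf_zero: "Qf \<sigma> l c (\<lambda>p. 0) (\<lambda>p. 0) = 0"
  using Qf_scale[of \<sigma> l c 0 "\<lambda>p. 0" "\<lambda>p. 0"] by simp

lemma fin_supp_scale: "fin_supp \<zeta> \<Longrightarrow> fin_supp (\<lambda>p. t * \<zeta> p)"
  unfolding fin_supp_def by (rule finite_subset[rotated]) (auto simp: supp_def)

lemma LipL_bound:
  assumes L: "LipL \<sigma> l c \<le> ereal m" and f1: "fin_supp \<zeta>1" and f2: "fin_supp \<zeta>2"
  shows "Qf \<sigma> l c \<zeta>1 \<zeta>2 \<le> m\<^sup>2 * ((l2norm \<zeta>1)\<^sup>2 + (l2norm \<zeta>2)\<^sup>2)"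
proof -
  define N where "N = (l2norm \<zeta>1)\<^sup>2 + (l2norm \<zeta>2)\<^sup>2"
  have Qnn: "Qf \<sigma> l c \<zeta>1 \<zeta>2 \<ge> 0" for \<zeta>1 \<zeta>2 unfolding Qf_def by simp
  have mem: "ereal (sqrt (Qf \<sigma> l c \<xi>1 \<xi>2)) \<le> ereal m"
    if "fin_supp \<xi>1" "fin_supp \<xi>2" "(l2norm \<xi>1)^2 + (l2norm \<xi>2)^2 \<le> 1" for \<xi>1 \<xi>2
  proof -
    have "ereal (sqrt (Qf \<sigma> l c \<xi>1 \<xi>2)) \<le> LipL \<sigma> l c"
      unfolding LipL_alt by (rule Sup_upper) (use that in blast)
    then show ?thesis using L by (rule order_trans)
  qed
  have m0: "m \<ge> 0" using mem[of "\<lambda>p. 0" "\<lambda>p. 0"] by (simp add: fin_supp_def supp_def l2norm_def Qf_zero)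
  show ?thesis
  proof (cases "N = 0")
    case True
    then have "l2norm \<zeta>1 = 0" "l2norm \<zeta>2 = 0" unfolding N_def
      by (simp_all add: add_nonneg_eq_0_iff)
    then have "\<zeta>1 = (\<lambda>p. 0)" "\<zeta>2 = (\<lambda>p. 0)" using l2norm_zero f1 f2 by blast+
    then show ?thesis by (simp add: Qf_zero)
  next
    case False
    then have Np: "N > 0" unfolding N_def by (simp add: add_pos_nonneg order_le_neq_trans)
    define t where "t = 1 / sqrt N"
    have t2: "t\<^sup>2 * N = 1" unfolding t_def using Np by (simp add: power_divide)
    have "(l2norm (\<lambda>p. complex_of_real t * \<zeta>1 p))\<^sup>2 + (l2norm (\<lambda>p. complex_of_real t * \<zeta>2 p))\<^sup>2
        = t\<^sup>2 * N" unfolding l2norm_scale N_def by (simp add: power_mult_distrib algebra_simps)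
    then have "ereal (sqrt (Qf \<sigma> l c (\<lambda>p. complex_of_real t * \<zeta>1 p) (\<lambda>p. complex_of_real t * \<zeta>2 p))) \<le> ereal m"
      using t2 by (intro mem fin_supp_scale f1 f2) simp
    then have "sqrt (t\<^sup>2 * Qf \<sigma> l c \<zeta>1 \<zeta>2) \<le> m" unfolding Qf_scale by simp
    then have "t\<^sup>2 * Qf \<sigma> l c \<zeta>1 \<zeta>2 \<le> m\<^sup>2"
      using m0 Qnn by (metis real_sqrt_le_iff real_sqrt_unique zero_le_power2 mult_nonneg_nonneg)
    then have "N * (t\<^sup>2 * Qf \<sigma> l c \<zeta>1 \<zeta>2) \<le> N * m\<^sup>2" using Np by (simp add: mult_left_mono)
    moreover have "N * (t\<^sup>2 * Qf \<sigma> l c \<zeta>1 \<zeta>2) = (t\<^sup>2 * N) * Qf \<sigma> l c \<zeta>1 \<zeta>2"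
      by (simp add: algebra_simps)
    ultimately have "Qf \<sigma> l c \<zeta>1 \<zeta>2 \<le> N * m\<^sup>2" using t2 by simp
    then show ?thesis unfolding N_def by (simp add: algebra_simps)
  qed
qed

definition ee :: "('g::group_add \<Rightarrow> 'g \<Rightarrow> complex) \<Rightarrow> 'g \<times> 'g \<Rightarrow> complex" where
  "ee \<sigma> p = delta (snd p) (- fst p) * \<sigma> (fst p) (- fst p)"

lemma tau_Mphi:
  "tau (twconv \<sigma> (Mphi \<psi> (delta g)) (delta h)) = \<psi> g * delta h (- g) * \<sigma> g (- g)"
proof -
  let ?F = "Mphi \<psi> (delta g)"
  have "(\<Sum>y\<in>supp ?F. ?F y * delta h (- y + 0) * \<sigma> y (- y + 0)) =
        (\<Sum>y\<in>{g}. ?F y * delta h (- y + 0) * \<sigma> y (- y + 0))"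
    by (rule sum.mono_neutral_left) (auto simp: supp_def Mphi_def delta_def)
  then show ?thesis unfolding tau_def twconv_def by (simp add: Mphi_def delta_def)
qed

lemma omega_Mphi:
  assumes "finite A" "supp c \<subseteq> A"
  shows "omega \<sigma> (Mphi \<psi>) c = (\<Sum>p\<in>A. c p * \<psi> (fst p) * ee \<sigma> p)"
proof -
  have "omega \<sigma> (Mphi \<psi>) c = (\<Sum>p\<in>supp c. c p * \<psi> (fst p) * ee \<sigma> p)"
    unfolding omega_def tau_Mphi ee_def by (simp add: algebra_simps)
  also have "\<dots> = (\<Sum>p\<in>A. c p * \<psi> (fst p) * ee \<sigma> p)"
    by (rule sum.mono_neutral_left) (use assms in \<open>auto simp: supp_def\<close>)
  finally show ?thesis .
qed

lemma Mphi_comp: "Mphi \<phi>1 \<circ> Mphi \<phi>2 = Mphi (\<lambda>g. \<phi>1 g * \<phi>2 g)"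
  by (simp add: fun_eq_iff Mphi_def)

lemma supp_scale: "supp (\<lambda>p. c p * \<chi> (fst p)) \<subseteq> supp c"
  by (auto simp: supp_def)

lemma omega_split:
  assumes "fin_supp c"
  shows "omega \<sigma> (Mphi (\<lambda>g. \<phi>1 g * \<phi>2 g)) c - omega \<sigma> (Mphi (\<lambda>g. \<phi>3 g * \<phi>4 g)) c =
     (omega \<sigma> (Mphi \<phi>1) (\<lambda>p. c p * \<phi>2 (fst p)) - omega \<sigma> (Mphi \<phi>3) (\<lambda>p. c p * \<phi>2 (fst p)))
   + (omega \<sigma> (Mphi \<phi>2) (\<lambda>p. c p * \<phi>3 (fst p)) - omega \<sigma> (Mphi \<phi>4) (\<lambda>p. c p * \<phi>3 (fst p)))"
proof -
  have f: "finite (supp c)" using assms by (simp add: fin_supp_def)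
  note o = omega_Mphi[OF f subset_refl] omega_Mphi[OF f supp_scale]
  show ?thesis unfolding o
    by (simp add: sum_subtractf[symmetric] sum.distrib[symmetric] algebra_simps)
qed

lemma P1_psd:
  assumes "\<chi> \<in> P1" "finite S"
  shows "psd_on S (\<lambda>x y. \<chi> (x - y))"
  unfolding psd_on_def
proof
  fix c :: "'a \<Rightarrow> complex"
  obtain h where h: "bij_betw h {0..<card S} S" using ex_bij_betw_nat_finite[OF assms(2)] by blast
  define n where "n = card S"
  have "qf S (\<lambda>x y. \<chi> (x - y)) c = (\<Sum>i\<in>{0..<n}. \<Sum>y\<in>S. cnj (c (h i)) * c y * \<chi> (h i - y))"
    unfolding qf_def n_def by (rule sum.reindex_bij_betw[OF h, symmetric])
  also have "\<dots> = (\<Sum>i\<in>{0..<n}. \<Sum>j\<in>{0..<n}. cnj (c (h i)) * c (h j) * \<chi> (h i - h j))"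
    by (rule sum.cong[OF refl]) (unfold n_def, rule sum.reindex_bij_betw[OF h, symmetric])
  also have "\<dots> = (\<Sum>i<n. \<Sum>j<n. cnj (c (h i)) * c (h j) * \<chi> (h i - h j))"
    by (simp add: atLeast0LessThan)
  finally have e: "qf S (\<lambda>x y. \<chi> (x - y)) c =
     (\<Sum>i<n. \<Sum>j<n. cnj (c (h i)) * c (h j) * \<chi> (h i - h j))" .
  have "\<forall>n (gs::nat \<Rightarrow> 'a) (cs::nat \<Rightarrow> complex).
      (\<Sum>i<n. \<Sum>j<n. cnj (cs i) * cs j * \<chi> (- gs i + gs j)) \<in> \<real> \<and>
      Re (\<Sum>i<n. \<Sum>j<n. cnj (cs i) * cs j * \<chi> (- gs i + gs j)) \<ge> 0"
    using assms(1) unfolding P1_def by blast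
  note inst = this[THEN spec[of _ n], THEN spec[of _ "\<lambda>i. - h i"], THEN spec[of _ "\<lambda>i. c (h i)"]]
  have "(\<Sum>i<n. \<Sum>j<n. cnj (c (h i)) * c (h j) * \<chi> (h i - h j)) \<in> \<real> \<and>
        0 \<le> Re (\<Sum>i<n. \<Sum>j<n. cnj (c (h i)) * c (h j) * \<chi> (h i - h j))"
    using inst by simp
  then show "qf S (\<lambda>x y. \<chi> (x - y)) c \<in> \<real> \<and> 0 \<le> Re (qf S (\<lambda>x y. \<chi> (x - y)) c)"
    unfolding e .
qed

lemma fin_supp_mulf: "fin_supp \<xi> \<Longrightarrow> fin_supp (mulf a \<xi>)"
  unfolding fin_supp_def using supp_mulf finite_subset by blast

lemma LipL_mono:
  assumes chi: "\<chi> \<in> P1" and fc0: "fin_supp c"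
  shows "LipL \<sigma> l (\<lambda>p. c p * \<chi> (fst p)) \<le> LipL \<sigma> l c"
proof -
  have fc: "finite (supp c)" using fc0 by (simp add: fin_supp_def)
  have "ereal (sqrt (Qf \<sigma> l c (\<lambda>p. 0) (\<lambda>p. 0))) \<le> LipL \<sigma> l c"
    unfolding LipL_alt
    by (rule Sup_upper, simp only: mem_Collect_eq, intro exI[of _ "\<lambda>p. 0"] conjI)
      (simp_all add: fin_supp_def supp_def l2norm_def)
  then have "ereal 0 \<le> LipL \<sigma> l c" by (simp add: Qf_zero)
  then have L0: "0 \<le> LipL \<sigma> l c" by (simp add: zero_ereal_def)
  show ?thesis
  proof (cases "LipL \<sigma> l c = \<infinity>")
    case True
    then show ?thesis by simp
  next
    case False
    then obtain m where m: "LipL \<sigma> l c = ereal m" using L0 by (cases "LipL \<sigma> l c") auto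
    have m0: "m \<ge> 0" using L0 m by simp
    show ?thesis unfolding m LipL_alt[of \<sigma> l "\<lambda>p. c p * \<chi> (fst p)"]
    proof (rule Sup_least)
      fix z assume "z \<in> {ereal (sqrt (Qf \<sigma> l (\<lambda>p. c p * \<chi> (fst p)) \<xi>1 \<xi>2)) | \<xi>1 \<xi>2.
         fin_supp \<xi>1 \<and> fin_supp \<xi>2 \<and> (l2norm \<xi>1)^2 + (l2norm \<xi>2)^2 \<le> 1}"
      then obtain \<xi>1 \<xi>2 where z: "z = ereal (sqrt (Qf \<sigma> l (\<lambda>p. c p * \<chi> (fst p)) \<xi>1 \<xi>2))"
        and f1: "fin_supp \<xi>1" and f2: "fin_supp \<xi>2" and N1: "(l2norm \<xi>1)^2 + (l2norm \<xi>2)^2 \<le> 1"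
        by blast
      define B where "B = img c (supp \<xi>1 \<union> supp \<xi>2) \<union> supp \<xi>1 \<union> supp \<xi>2"
      have fB: "finite B" unfolding B_def using f1 f2 fc
        by (simp add: img_finite fin_supp_def)
      define S where "S = fst ` B"
      have fS: "finite S" unfolding S_def using fB by simp
      obtain a where fac: "\<And>x y. x \<in> S \<Longrightarrow> y \<in> S \<Longrightarrow> \<chi> (x - y) = (\<Sum>k\<in>S. cnj (a k x) * a k y)"
        using cholesky[OF fS P1_psd[OF chi fS]] by blast
      have n1: "(\<Sum>k\<in>S. (cmod (a k u))\<^sup>2) = 1" if u: "u \<in> S" for u
      proof -
        have "\<chi> 0 = 1" using chi by (simp add: P1_def)
        then have "(1::complex) = (\<Sum>k\<in>S. cnj (a k u) * a k u)" using fac[OF u u] by simp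
        also have "\<dots> = (\<Sum>k\<in>S. complex_of_real ((cmod (a k u))\<^sup>2))"
          by (intro sum.cong refl) (simp only: complex_norm_square mult.commute)
        also have "\<dots> = complex_of_real (\<Sum>k\<in>S. (cmod (a k u))\<^sup>2)"
          by (simp only: of_real_sum)
        finally show ?thesis
          by (metis of_real_1 of_real_eq_iff)
      qed
      have SB: "fst ` B \<subseteq> S" unfolding S_def by simp
      have s1: "supp \<xi>1 \<subseteq> B" and s2: "supp \<xi>2 \<subseteq> B" unfolding B_def by auto
      have i1: "img c (supp \<xi>1) \<subseteq> B" and i2: "img c (supp \<xi>2) \<subseteq> B"
        unfolding B_def using img_mono[of _ "supp \<xi>1 \<union> supp \<xi>2" c c] by auto
      note cb1 = comp_bound[where \<chi>=\<chi> and a=a, OF fB s1 i1 fc SB fS fac n1, of "dminus l" \<sigma>]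
      note cb2 = comp_bound[where \<chi>=\<chi> and a=a, OF fB s2 i2 fc SB fS fac n1, of "dplus l" \<sigma>]
      have "Qf \<sigma> l (\<lambda>p. c p * \<chi> (fst p)) \<xi>1 \<xi>2
          \<le> (\<Sum>k\<in>S. Qf \<sigma> l c (mulf (a k) \<xi>1) (mulf (a k) \<xi>2))"
        unfolding Qf_def Dplus_eq Dminus_eq sum.distrib using cb1 cb2 by simp
      also have "\<dots> \<le> (\<Sum>k\<in>S. m\<^sup>2 * ((l2norm (mulf (a k) \<xi>1))\<^sup>2 + (l2norm (mulf (a k) \<xi>2))\<^sup>2))"
        by (rule sum_mono) (rule LipL_bound, use m in simp, (rule fin_supp_mulf f1 f2)+)
      also have "\<dots> = m\<^sup>2 * ((l2norm \<xi>1)\<^sup>2 + (l2norm \<xi>2)\<^sup>2)"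
        unfolding sum_distrib_left[symmetric] sum.distrib
        using mulf_norm[where a=a, OF fB s1 SB n1] mulf_norm[where a=a, OF fB s2 SB n1] by simp
      also have "\<dots> \<le> m\<^sup>2" using N1 by (simp add: mult_left_le)
      finally have "Qf \<sigma> l (\<lambda>p. c p * \<chi> (fst p)) \<xi>1 \<xi>2 \<le> m\<^sup>2" .
      then have "sqrt (Qf \<sigma> l (\<lambda>p. c p * \<chi> (fst p)) \<xi>1 \<xi>2) \<le> sqrt (m\<^sup>2)"
        by (rule real_sqrt_le_mono)
      then have "sqrt (Qf \<sigma> l (\<lambda>p. c p * \<chi> (fst p)) \<xi>1 \<xi>2) \<le> m"
        using m0 by simp
      then show "z \<le> ereal m" unfolding z by simp
    qed
  qed
qed

lemma main_ineq:
  assumes p2: "\<phi>2 \<in> P1" and p3: "\<phi>3 \<in> P1"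
  shows "DeltaMin \<sigma> l (Mphi (\<lambda>g. \<phi>1 g * \<phi>2 g)) (Mphi (\<lambda>g. \<phi>3 g * \<phi>4 g))
           \<le> DeltaMin \<sigma> l (Mphi \<phi>1) (Mphi \<phi>3) + DeltaMin \<sigma> l (Mphi \<phi>2) (Mphi \<phi>4)"
  unfolding DeltaMin_def[of \<sigma> l "Mphi (\<lambda>g. \<phi>1 g * \<phi>2 g)"]
proof (rule Sup_least)
  fix z assume "z \<in> {ereal (cmod (omega \<sigma> (Mphi (\<lambda>g. \<phi>1 g * \<phi>2 g)) c - omega \<sigma> (Mphi (\<lambda>g. \<phi>3 g * \<phi>4 g)) c)) |c.
      fin_supp c \<and> LipL \<sigma> l c \<le> 1}"
  then obtain c where z: "z = ereal (cmod (omega \<sigma> (Mphi (\<lambda>g. \<phi>1 g * \<phi>2 g)) c - omega \<sigma> (Mphi (\<lambda>g. \<phi>3 g * \<phi>4 g)) c))"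
    and fc: "fin_supp c" and Lc: "LipL \<sigma> l c \<le> 1" by blast
  define c2 where "c2 = (\<lambda>p. c p * \<phi>2 (fst p))"
  define c3 where "c3 = (\<lambda>p. c p * \<phi>3 (fst p))"
  have f2: "fin_supp c2" and f3: "fin_supp c3"
    using fc supp_scale[of c] unfolding fin_supp_def c2_def c3_def by (auto intro: finite_subset)
  have L2: "LipL \<sigma> l c2 \<le> 1" unfolding c2_def using LipL_mono[OF p2 fc] Lc by (rule order_trans)
  have L3: "LipL \<sigma> l c3 \<le> 1" unfolding c3_def using LipL_mono[OF p3 fc] Lc by (rule order_trans)
  define A where "A = omega \<sigma> (Mphi \<phi>1) c2 - omega \<sigma> (Mphi \<phi>3) c2"
  define B where "B = omega \<sigma> (Mphi \<phi>2) c3 - omega \<sigma> (Mphi \<phi>4) c3"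
  have zAB: "z = ereal (cmod (A + B))"
    unfolding z omega_split[OF fc] A_def B_def c2_def c3_def ..
  have hA: "ereal (cmod A) \<le> DeltaMin \<sigma> l (Mphi \<phi>1) (Mphi \<phi>3)"
    unfolding DeltaMin_def A_def by (rule Sup_upper) (use f2 L2 in blast)
  have hB: "ereal (cmod B) \<le> DeltaMin \<sigma> l (Mphi \<phi>2) (Mphi \<phi>4)"
    unfolding DeltaMin_def B_def by (rule Sup_upper) (use f3 L3 in blast)
  have "z \<le> ereal (cmod A + cmod B)" unfolding zAB by (simp add: norm_triangle_ineq)
  also have "\<dots> = ereal (cmod A) + ereal (cmod B)" by simp
  also have "\<dots> \<le> DeltaMin \<sigma> l (Mphi \<phi>1) (Mphi \<phi>3) + DeltaMin \<sigma> l (Mphi \<phi>2) (Mphi \<phi>4)"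
    by (rule add_mono[OF hA hB])
  finally show "z \<le> DeltaMin \<sigma> l (Mphi \<phi>1) (Mphi \<phi>3) + DeltaMin \<sigma> l (Mphi \<phi>2) (Mphi \<phi>4)" .
qed

theorem theorem6p9:
  fixes \<sigma> :: "'g::group_add \<Rightarrow> 'g \<Rightarrow> complex" and l :: "'g \<Rightarrow> real"
    and \<phi>1 \<phi>2 \<phi>3 \<phi>4 :: "'g \<Rightarrow> complex"
  assumes "countable (UNIV :: 'g set)"
    and "amenable_group TYPE('g)"
    and "proper_length l"
    and "normalized_2cocycle \<sigma>"
    and "\<phi>1 \<in> P1" and "\<phi>2 \<in> P1" and "\<phi>3 \<in> P1" and "\<phi>4 \<in> P1"
  shows "DeltaMin \<sigma> l (Mphi \<phi>1 \<circ> Mphi \<phi>2) (Mphi \<phi>3 \<circ> Mphi \<phi>4)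
           \<le> DeltaMin \<sigma> l (Mphi \<phi>1) (Mphi \<phi>3) + DeltaMin \<sigma> l (Mphi \<phi>2) (Mphi \<phi>4)"
  unfolding Mphi_comp using main_ineq[OF assms(6,7)] .

end
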